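(* Let $I$ be a finite index set, $E_i$ ($i\in I$) and $F$ nondeterministic expressions, $X$ a variable, and $p_i>0$ with $\sum_{i\in I}p_i=1$. Then $\mathrm{rec}\,X.\big(\tau.\bigoplus_{i\in I}p_i(X+E_i)+F\big)\ \simeq\ \mathrm{rec}\,X.\big(\tau.\partial(X)+\sum_{i\in I}E_i+F\big)$.
   Context: Fix a set $\mathsf{Act}$ of actions containing $\tau$ and a set $\mathsf{Var}$ of variables. Nondeterministic expressions: $E ::= 0 \mid X \mid \alpha.P \mid \mathrm{rec}\,X.E \mid E + E$; probabilistic expressions: $P ::= \partial(E) \mid P \oplus_p P$ ($0<p<1$). $\sum_{i\in I}E_i$ is an iterated $+$; $\bigoplus_{i\in I}p_iE_i$ denotes an iterated $\oplus$ of the $\partial(E_i)$ with weights chosen so that $E_i$ has probability $p_i$. $\mathrm{rec}\,X$ binds $X$; closed means no free variables; $E[\vec F/\vec X]$ is capture-avoiding substitution. Subdistributions $\mu$ over $S$: $\mu:S\to\mathbb R_{\ge0}$, $|\mu|=\sum\mu(s)\le1$; $\delta_s$ Dirac. Semantics: least relations with $\partial(E)\mapsto\delta_E$; $P\oplus_pQ\mapsto p\mu+(1-p)\nu$ if $P\mapsto\mu,Q\mapsto\nu$; $\alpha.P\xrightarrow{\alpha}\mu$ if $P\mapsto\mu$; $\mathrm{rec}\,X.E\xrightarrow{\alpha}\mu$ if $E[\mathrm{rec}\,X.E/X]\xrightarrow{\alpha}\mu$; $E+F\xrightarrow{\alpha}\mu$ and $F+E\xrightarrow{\alpha}\mu$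 if $E\xrightarrow{\alpha}\mu$. Combined transitions on subdistributions: least relation with $\delta_E\xrightarrow{\alpha}\mu$ if $E\xrightarrow{\alpha}\mu$, closed under $\sum p_i\nu_i\xrightarrow{\alpha}\sum p_i\mu_i$ ($\nu_i\xrightarrow{\alpha}\mu_i$, $p_i\ge0$, $\sum p_i\le1$). A derivation is $(\mu_i^{\to},\mu_i^{\times})_{i\in\mathbb N}$ with $\mu_i^{\to}\xrightarrow{\tau}\mu^{\to}_{i+1}+\mu^{\times}_{i+1}$; $\mu\Rightarrow\nu$ iff a derivation has $\mu=\mu_0^{\to}+\mu_0^{\times}$, $\nu=\sum_i\mu_i^\times$. $\mu\xRightarrow{\alpha}\nu$ iff $\mu\Rightarrow\xrightarrow{\alpha}\Rightarrow\nu$; $\xRightarrow{\hat\alpha}$ is $\Rightarrow$ for $\alpha=\tau$, else $\xRightarrow{\alpha}$. Lifting of a relation to subdistributions: least relation with $\delta_E\mathcal R\delta_F$ for $E\mathcal RF$, closed under convex combinations with coefficients summing to at most 1. Weak bisimulation on closed expressions: if $E\mathcal RF$ and $E\xrightarrow{\alpha}\mu$ then $F\xRightarrow{\hat\alpha}\nu$ with $\mu\mathcal R\nu$, and symmetrically; $\approx$ is weak bisimilarity. For closed $E,F$: $E\simeq F$ iff $E\xrightarrow{\alpha}\mu$ implies $F\xRightarrow{\alpha}\nu$ with $\mu\approx\nu$ and symmetrically. For open expressions with free variables $\vec X$: $E\simeq F$ iff $E[\vec G/\vec X]\simeq F[\vec G/\vec X]$ for all closed $\vec G$. *)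

theory Defs
  imports "HOL-Analysis.Infinite_Sum"
begin

datatype 'a act = Tau | Act 'a

typedef openprob = "{p::real. 0 < p \<and> p < 1}"
  by (rule exI[of _ "1/2"]) auto

datatype ('a, 'v) nexp =
    Nil
  | Var 'v
  | Pre "'a act" "('a, 'v) pexp"
  | Rec 'v "('a, 'v) nexp"
  | Plus "('a, 'v) nexp" "('a, 'v) nexp"
and ('a, 'v) pexp =
    Dirac "('a, 'v) nexp"
  | PChoice "('a, 'v) pexp" openprob "('a, 'v) pexp"

fun fvN :: "('a, 'v) nexp \<Rightarrow> 'v set"
and fvP :: "('a, 'v) pexp \<Rightarrow> 'v set" where
  "fvN Nil = {}"
| "fvN (Var X) = {X}"
| "fvN (Pre a P) = fvP P"
| "fvN (Rec X E) = fvN E - {X}"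
| "fvN (Plus E F) = fvN E \<union> fvN F"
| "fvP (Dirac E) = fvN E"
| "fvP (PChoice P p Q) = fvP P \<union> fvP Q"

definition closed :: "('a, 'v) nexp \<Rightarrow> bool" where
  "closed E \<longleftrightarrow> fvN E = {}"

text \<open>Bound variables are protected; substitution is
capture-avoiding whenever the substituted expressions are closed, which is the only
case used below (unfolding of closed recursions, closing substitutions).\<close>

fun substN :: "('v \<Rightarrow> ('a, 'v) nexp) \<Rightarrow> ('a, 'v) nexp \<Rightarrow> ('a, 'v) nexp"
and substP :: "('v \<Rightarrow> ('a, 'v) nexp) \<Rightarrow> ('a, 'v) pexp \<Rightarrow> ('a, 'v) pexp" where
  "substN \<sigma> Nil = Nil"
| "substN \<sigma> (Var X) = \<sigma> X"
| "substN \<sigma> (Pre a P) = Pre a (substP \<sigma> P)"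
| "substN \<sigma> (Rec X E) = Rec X (substN (\<sigma>(X := Var X)) E)"
| "substN \<sigma> (Plus E F) = Plus (substN \<sigma> E) (substN \<sigma> F)"
| "substP \<sigma> (Dirac E) = Dirac (substN \<sigma> E)"
| "substP \<sigma> (PChoice P p Q) = PChoice (substP \<sigma> P) p (substP \<sigma> Q)"

fun nsum :: "('i \<Rightarrow> ('a, 'v) nexp) \<Rightarrow> 'i list \<Rightarrow> ('a, 'v) nexp" where
  "nsum E [] = Nil"
| "nsum E [i] = E i"
| "nsum E (i # j # is) = Plus (E i) (nsum E (j # is))"

text \<open>Iterated probabilistic choice: \<open>E i\<close> gets probability \<open>p i\<close> (weights normalised
along the list, so that with total weight 1 the index \<open>i\<close> has probability \<open>p i\<close>).\<close>

fun pbig :: "('i \<Rightarrow> real) \<Rightarrow> ('i \<Rightarrow> ('a, 'v) nexp) \<Rightarrow> 'i list \<Rightarrow> ('a, 'v) pexp" where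
  "pbig p E [] = Dirac Nil"
| "pbig p E [i] = Dirac (E i)"
| "pbig p E (i # j # is) =
     PChoice (Dirac (E i)) (Abs_openprob (p i / sum_list (map p (i # j # is)))) (pbig p E (j # is))"

type_synonym 's subdist = "'s \<Rightarrow> real"

definition is_subdist :: "'s subdist \<Rightarrow> bool" where
  "is_subdist \<mu> \<longleftrightarrow> (\<forall>s. 0 \<le> \<mu> s) \<and> \<mu> summable_on UNIV \<and> infsum \<mu> UNIV \<le> 1"

definition dirac :: "'s \<Rightarrow> 's subdist" where
  "dirac s = (\<lambda>t. if t = s then 1 else 0)"

definition comb :: "'k set \<Rightarrow> ('k \<Rightarrow> real) \<Rightarrow> ('k \<Rightarrow> 's subdist) \<Rightarrow> 's subdist" where
  "comb K p \<mu> = (\<lambda>s. \<Sum>\<^sub>\<infinity>k\<in>K. p k * \<mu> k s)"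

definition weights :: "'k set \<Rightarrow> ('k \<Rightarrow> real) \<Rightarrow> bool" where
  "weights K p \<longleftrightarrow> countable K \<and> (\<forall>k\<in>K. 0 \<le> p k) \<and> p summable_on K \<and> infsum p K \<le> 1"

fun pden :: "('a, 'v) pexp \<Rightarrow> ('a, 'v) nexp subdist" where
  "pden (Dirac E) = dirac E"
| "pden (PChoice P p Q) = (\<lambda>s. Rep_openprob p * pden P s + (1 - Rep_openprob p) * pden Q s)"

inductive step :: "('a, 'v) nexp \<Rightarrow> 'a act \<Rightarrow> ('a, 'v) nexp subdist \<Rightarrow> bool" where
  step_pre: "step (Pre a P) a (pden P)"
| step_rec: "step (substN (Var(X := Rec X E)) E) a \<mu> \<Longrightarrow> step (Rec X E) a \<mu>"
| step_plusL: "step E a \<mu> \<Longrightarrow> step (Plus E F) a \<mu>"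
| step_plusR: "step E a \<mu> \<Longrightarrow> step (Plus F E) a \<mu>"

text \<open>Combined transitions between subdistributions (countable combinations, indexed
by subsets of \<open>nat\<close>, which covers every countable index set).\<close>
inductive ctrans :: "('a, 'v) nexp subdist \<Rightarrow> 'a act \<Rightarrow> ('a, 'v) nexp subdist \<Rightarrow> bool" where
  ctrans_base: "step E a \<mu> \<Longrightarrow> ctrans (dirac E) a \<mu>"
| ctrans_comb: "\<lbrakk>weights (K :: nat set) p; \<forall>k\<in>K. ctrans (\<nu> k) a (\<mu> k)\<rbrakk>
                \<Longrightarrow> ctrans (comb K p \<nu>) a (comb K p \<mu>)"

definition tau_star :: "('a, 'v) nexp subdist \<Rightarrow> ('a, 'v) nexp subdist \<Rightarrow> bool" where
  "tau_star \<mu> \<nu> \<longleftrightarrow>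
     (\<exists>mt mx :: nat \<Rightarrow> ('a, 'v) nexp subdist.
        (\<forall>i. is_subdist (mt i) \<and> is_subdist (mx i)) \<and>
        (\<forall>i. ctrans (mt i) Tau (\<lambda>s. mt (Suc i) s + mx (Suc i) s)) \<and>
        \<mu> = (\<lambda>s. mt 0 s + mx 0 s) \<and>
        \<nu> = (\<lambda>s. \<Sum>\<^sub>\<infinity>i. mx i s))"

definition wtrans :: "('a, 'v) nexp subdist \<Rightarrow> 'a act \<Rightarrow> ('a, 'v) nexp subdist \<Rightarrow> bool" where
  "wtrans \<mu> a \<nu> \<longleftrightarrow> (\<exists>\<mu>1 \<mu>2. tau_star \<mu> \<mu>1 \<and> ctrans \<mu>1 a \<mu>2 \<and> tau_star \<mu>2 \<nu>)"

definition hat_wtrans :: "('a, 'v) nexp subdist \<Rightarrow> 'a act \<Rightarrow> ('a, 'v) nexp subdist \<Rightarrow> bool" where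
  "hat_wtrans \<mu> a \<nu> \<longleftrightarrow> (if a = Tau then tau_star \<mu> \<nu> else wtrans \<mu> a \<nu>)"

inductive lift :: "('s \<Rightarrow> 's \<Rightarrow> bool) \<Rightarrow> 's subdist \<Rightarrow> 's subdist \<Rightarrow> bool" for R where
  lift_base: "R E F \<Longrightarrow> lift R (dirac E) (dirac F)"
| lift_comb: "\<lbrakk>weights (K :: nat set) p; \<forall>k\<in>K. lift R (\<mu> k) (\<nu> k)\<rbrakk>
              \<Longrightarrow> lift R (comb K p \<mu>) (comb K p \<nu>)"

definition weak_bisim :: "(('a, 'v) nexp \<Rightarrow> ('a, 'v) nexp \<Rightarrow> bool) \<Rightarrow> bool" where
  "weak_bisim R \<longleftrightarrow>
     (\<forall>E F. R E F \<longrightarrow> closed E \<and> closed F \<and>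
        (\<forall>a \<mu>. step E a \<mu> \<longrightarrow> (\<exists>\<nu>. hat_wtrans (dirac F) a \<nu> \<and> lift R \<mu> \<nu>)) \<and>
        (\<forall>a \<nu>. step F a \<nu> \<longrightarrow> (\<exists>\<mu>. hat_wtrans (dirac E) a \<mu> \<and> lift R \<mu> \<nu>)))"

definition wbisim :: "('a, 'v) nexp \<Rightarrow> ('a, 'v) nexp \<Rightarrow> bool" where
  "wbisim E F \<longleftrightarrow> (\<exists>R. weak_bisim R \<and> R E F)"

definition ccong :: "('a, 'v) nexp \<Rightarrow> ('a, 'v) nexp \<Rightarrow> bool" where
  "ccong E F \<longleftrightarrow> closed E \<and> closed F \<and>
     (\<forall>a \<mu>. step E a \<mu> \<longrightarrow> (\<exists>\<nu>. wtrans (dirac F) a \<nu> \<and> lift wbisim \<mu> \<nu>)) \<and>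
     (\<forall>a \<nu>. step F a \<nu> \<longrightarrow> (\<exists>\<mu>. wtrans (dirac E) a \<mu> \<and> lift wbisim \<mu> \<nu>))"

definition cong :: "('a, 'v) nexp \<Rightarrow> ('a, 'v) nexp \<Rightarrow> bool" where
  "cong E F \<longleftrightarrow> (\<forall>\<sigma>. (\<forall>X. closed (\<sigma> X)) \<longrightarrow> ccong (substN \<sigma> E) (substN \<sigma> F))"

end

theory Submission
  imports Defs
begin


lemma subst_cong:
  "(\<forall>Y\<in>fvN G. \<sigma> Y = \<sigma>' Y) \<Longrightarrow> substN \<sigma> G = substN \<sigma>' G"
  "(\<forall>Y\<in>fvP P. \<sigma> Y = \<sigma>' Y) \<Longrightarrow> substP \<sigma> P = substP \<sigma>' P"
  by (induct G and P arbitrary: \<sigma> \<sigma>' and \<sigma> \<sigma>') auto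

lemma subst_Var: "substN Var (G::('a,'v) nexp) = G" "substP Var (P::('a,'v) pexp) = P"
  by (induct G and P) auto

lemma fv_subst:
  "fvN (substN \<sigma> G) \<subseteq> (\<Union>Y\<in>fvN G. fvN (\<sigma> Y))"
  "fvP (substP \<sigma> P) \<subseteq> (\<Union>Y\<in>fvP P. fvN (\<sigma> Y))"
proof (induct G and P arbitrary: \<sigma> and \<sigma>)
  case (Rec Y G)
  have h: "fvN (substN (\<sigma>(Y := Var Y)) G) \<subseteq> (\<Union>Z\<in>fvN G. fvN ((\<sigma>(Y := Var Y)) Z))"
    by (rule Rec)
  show ?case
  proof
    fix x assume "x \<in> fvN (substN \<sigma> (Rec Y G))"
    then have x: "x \<in> fvN (substN (\<sigma>(Y := Var Y)) G)" "x \<noteq> Y" by auto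
    then obtain Z where "Z \<in> fvN G" "x \<in> fvN ((\<sigma>(Y := Var Y)) Z)" using h by blast
    then show "x \<in> (\<Union>Y\<in>fvN (Rec Y G). fvN (\<sigma> Y))" using x by (auto split: if_splits)
  qed
qed (auto, blast+)

lemma subst_closed: "closed G \<Longrightarrow> substN \<sigma> G = G"
  using subst_cong(1)[of G \<sigma> Var] subst_Var(1) by (auto simp: closed_def)

lemma subst_comp:
  "(\<forall>Z\<in>fvN G. \<tau> Z = Var Z \<or> closed (\<tau> Z)) \<Longrightarrow> substN \<sigma> (substN \<tau> G) = substN (\<lambda>Z. substN \<sigma> (\<tau> Z)) G"
  "(\<forall>Z\<in>fvP P. \<tau> Z = Var Z \<or> closed (\<tau> Z)) \<Longrightarrow> substP \<sigma> (substP \<tau> P) = substP (\<lambda>Z. substN \<sigma> (\<tau> Z)) P"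
proof (induct G and P arbitrary: \<sigma> \<tau> and \<sigma> \<tau>)
  case (Rec Y G)
  have h: "\<forall>Z\<in>fvN G. (\<tau>(Y := Var Y)) Z = Var Z \<or> closed ((\<tau>(Y := Var Y)) Z)"
    using Rec.prems by auto
  have "substN (\<sigma>(Y := Var Y)) (substN (\<tau>(Y := Var Y)) G)
      = substN (\<lambda>Z. substN (\<sigma>(Y := Var Y)) ((\<tau>(Y := Var Y)) Z)) G"
    using Rec.hyps h by blast
  also have "\<dots> = substN ((\<lambda>Z. substN \<sigma> (\<tau> Z))(Y := Var Y)) G"
  proof (rule subst_cong(1), intro ballI)
    fix Z assume Z: "Z \<in> fvN G"
    show "substN (\<sigma>(Y := Var Y)) ((\<tau>(Y := Var Y)) Z) = ((\<lambda>Z. substN \<sigma> (\<tau> Z))(Y := Var Y)) Z"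
    proof (cases "Z = Y")
      case False
      then have "\<tau> Z = Var Z \<or> closed (\<tau> Z)" using Rec.prems Z by auto
      then show ?thesis using False by (auto simp: subst_closed)
    qed simp
  qed
  finally show ?case by simp
qed auto



definition psd :: "'s subdist \<Rightarrow> real \<Rightarrow> bool" where
  "psd \<mu> m \<longleftrightarrow> (\<forall>s. 0 \<le> \<mu> s) \<and> (\<mu> has_sum m) UNIV"

lemma psd_subdist: "psd \<mu> m \<Longrightarrow> m \<le> 1 \<Longrightarrow> is_subdist \<mu>"
  unfolding psd_def is_subdist_def by (auto simp: has_sum_iff)

lemma psd_nonneg: "psd \<mu> m \<Longrightarrow> 0 \<le> m"
  unfolding psd_def using has_sum_nonneg by blast

lemma psd_dirac: "psd (dirac u) 1"
  unfolding psd_def dirac_def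
  by (auto split: if_splits intro!: has_sum_finite_neutralI[where B="{u}"])

lemma psd_zero: "psd (\<lambda>s. 0) 0"
  unfolding psd_def by auto

lemma psd_add: "psd \<mu> m \<Longrightarrow> psd \<nu> n \<Longrightarrow> psd (\<lambda>s. \<mu> s + \<nu> s) (m + n)"
  unfolding psd_def by (auto intro: has_sum_add add_nonneg_nonneg)

lemma psd_scale: "psd \<mu> m \<Longrightarrow> 0 \<le> c \<Longrightarrow> psd (\<lambda>s. c * \<mu> s) (c * m)"
  unfolding psd_def by (auto intro: has_sum_cmult_right)

lemma psd_sum: "finite N \<Longrightarrow> (\<forall>n\<in>N. psd (f n) (m n) \<and> 0 \<le> w n) \<Longrightarrow>
   psd (\<lambda>s. \<Sum>n\<in>N. w n * f n s) (\<Sum>n\<in>N. w n * m n)"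
proof (induct N rule: finite_induct)
  case empty then show ?case using psd_zero by simp
next
  case (insert x F)
  then have "psd (\<lambda>s. w x * f x s + (\<Sum>n\<in>F. w n * f n s)) (w x * m x + (\<Sum>n\<in>F. w n * m n))"
    by (intro psd_add psd_scale) auto
  then show ?case using insert by simp
qed

lemma psd_eq: "psd \<mu> m \<Longrightarrow> (\<And>s. \<mu> s = \<nu> s) \<Longrightarrow> m = n \<Longrightarrow> psd \<nu> n"
proof -
  assume "psd \<mu> m" "\<And>s. \<mu> s = \<nu> s" "m = n"
  moreover then have "\<mu> = \<nu>" by auto
  ultimately show ?thesis by simp
qed

lemma psd_pden: "psd (pden P) 1"
proof (induct P rule: pden.induct)
  case (1 E) then show ?case by (simp add: psd_dirac)
next
  case (2 P p Q)
  have r: "0 < Rep_openprob p" "Rep_openprob p < 1" using Rep_openprob[of p] by auto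
  have "psd (\<lambda>s. Rep_openprob p * pden P s + (1 - Rep_openprob p) * pden Q s)
      (Rep_openprob p * 1 + (1 - Rep_openprob p) * 1)"
    using 2 r by (intro psd_add psd_scale) auto
  then show ?case by simp
qed

lemma step_psd: "step t a \<mu> \<Longrightarrow> psd \<mu> 1"
  by (induct rule: step.induct) (auto simp: psd_pden)

lemma comb_fin: "finite K \<Longrightarrow> comb K w \<mu> = (\<lambda>s. \<Sum>k\<in>K. w k * \<mu> k s)"
  unfolding comb_def by simp

lemma weights_fin: "finite K \<Longrightarrow> (\<forall>k\<in>K. 0 \<le> w k) \<Longrightarrow> sum w K \<le> 1 \<Longrightarrow> weights K w"
  unfolding weights_def by (auto intro: countable_finite)

lemma ctrans_zero: "ctrans (\<lambda>s. 0) a (\<lambda>s. 0)"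
proof -
  have "weights ({}::nat set) (\<lambda>_. 0)" by (rule weights_fin) auto
  from ctrans_comb[OF this, where a=a and \<nu>="\<lambda>_. \<lambda>s. 0" and \<mu>="\<lambda>_. \<lambda>s. 0"]
  show ?thesis by (simp add: comb_fin)
qed

lemma ctrans_fin:
  assumes "finite (K::nat set)" "\<forall>k\<in>K. 0 \<le> w k" "sum w K \<le> 1" "\<forall>k\<in>K. step (st k) a (f k)"
  shows "ctrans (\<lambda>s. \<Sum>k\<in>K. w k * dirac (st k) s) a (\<lambda>s. \<Sum>k\<in>K. w k * f k s)"
proof -
  have "weights K w" using assms by (intro weights_fin) auto
  from ctrans_comb[OF this, where a=a and \<nu>="\<lambda>k. dirac (st k)" and \<mu>=f] assms(4)
  show ?thesis by (simp add: comb_fin[OF assms(1)] ctrans_base)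
qed

lemma infsum_single_nat: "(\<Sum>\<^sub>\<infinity>i::nat. if i = j then c else 0) = (c::real)"
  by (rule infsumI, rule has_sum_finite_neutralI[where B="{j}"]) auto

lemma tau_zero:
  fixes \<mu> :: "('a,'v) nexp subdist"
  assumes h: "is_subdist \<mu>" shows "tau_star \<mu> \<mu>"
proof -
  define mt where "mt = (\<lambda>i::nat. (\<lambda>s. 0) :: ('a,'v) nexp subdist)"
  define mx where "mx = (\<lambda>i::nat. if i = 0 then \<mu> else (\<lambda>s. 0))"
  have z: "is_subdist (\<lambda>s. 0)" using psd_subdist[OF psd_zero] by simp
  have 1: "\<forall>i. is_subdist (mt i) \<and> is_subdist (mx i)" using h z by (auto simp: mt_def mx_def)
  have 2: "\<forall>i. ctrans (mt i) Tau (\<lambda>s. mt (Suc i) s + mx (Suc i) s)"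
    using ctrans_zero by (simp add: mt_def mx_def)
  have 3: "\<mu> = (\<lambda>s. mt 0 s + mx 0 s)" by (simp add: mt_def mx_def)
  have "\<And>s. (\<Sum>\<^sub>\<infinity>i. mx i s) = \<mu> s"
  proof -
    fix s
    have "(\<lambda>i. mx i s) = (\<lambda>i. if i = 0 then \<mu> s else 0)" by (auto simp: mx_def)
    then show "(\<Sum>\<^sub>\<infinity>i. mx i s) = \<mu> s" using infsum_single_nat by simp
  qed
  then have 4: "\<mu> = (\<lambda>s. \<Sum>\<^sub>\<infinity>i. mx i s)" by auto
  show ?thesis unfolding tau_star_def using 1 2 3 4 by blast
qed

lemma tau_one:
  fixes \<mu> :: "('a,'v) nexp subdist"
  assumes h: "step u Tau \<mu>" shows "tau_star (dirac u) \<mu>"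
proof -
  have hs: "is_subdist \<mu>" using step_psd[OF h] psd_subdist by blast
  define mt where "mt = (\<lambda>i::nat. if i = 0 then dirac u else (\<lambda>s. 0) :: ('a,'v) nexp subdist)"
  define mx where "mx = (\<lambda>i::nat. if i = 1 then \<mu> else (\<lambda>s. 0))"
  have z: "is_subdist (\<lambda>s. 0)" using psd_subdist[OF psd_zero] by simp
  have d: "is_subdist (dirac u)" using psd_subdist[OF psd_dirac] by simp
  have 1: "\<forall>i. is_subdist (mt i) \<and> is_subdist (mx i)" using hs z d by (auto simp: mt_def mx_def)
  have 2: "\<forall>i. ctrans (mt i) Tau (\<lambda>s. mt (Suc i) s + mx (Suc i) s)"
  proof
    fix i show "ctrans (mt i) Tau (\<lambda>s. mt (Suc i) s + mx (Suc i) s)"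
    proof (cases i)
      case 0 then show ?thesis using ctrans_base[OF h] by (simp add: mt_def mx_def)
    next
      case (Suc n) then show ?thesis using ctrans_zero by (simp add: mt_def mx_def)
    qed
  qed
  have 3: "dirac u = (\<lambda>s. mt 0 s + mx 0 s)" by (simp add: mt_def mx_def)
  have "\<And>s. (\<Sum>\<^sub>\<infinity>i. mx i s) = \<mu> s"
  proof -
    fix s
    have "(\<lambda>i. mx i s) = (\<lambda>i. if i = 1 then \<mu> s else 0)" by (auto simp: mx_def)
    then show "(\<Sum>\<^sub>\<infinity>i. mx i s) = \<mu> s" using infsum_single_nat by simp
  qed
  then have 4: "\<mu> = (\<lambda>s. \<Sum>\<^sub>\<infinity>i. mx i s)" by auto
  show ?thesis unfolding tau_star_def using 1 2 3 4 by blast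
qed

lemma wtrans_one: "step u a \<mu> \<Longrightarrow> wtrans (dirac u) a \<mu>"
  unfolding wtrans_def
  using tau_zero psd_subdist[OF psd_dirac] psd_subdist[OF step_psd] ctrans_base
  by (metis order_refl)

lemma hat_one: "step u a \<mu> \<Longrightarrow> hat_wtrans (dirac u) a \<mu>"
  unfolding hat_wtrans_def using wtrans_one tau_one by auto

lemma lift_mono: "lift R \<mu> \<nu> \<Longrightarrow> (\<And>x y. R x y \<Longrightarrow> R' x y) \<Longrightarrow> lift R' \<mu> \<nu>"
  by (induct rule: lift.induct) (auto intro: lift.intros)



lemma substP_pbig: "substP \<sigma> (pbig p f xs) = pbig p (\<lambda>i. substN \<sigma> (f i)) xs"
  by (induct p f xs rule: pbig.induct) auto

lemma substN_nsum: "substN \<sigma> (nsum f xs) = nsum (\<lambda>i. substN \<sigma> (f i)) xs"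
  by (induct f xs rule: nsum.induct) auto

lemma fv_pbig: "fvP (pbig p f xs) \<subseteq> (\<Union>i\<in>set xs. fvN (f i))"
  by (induct p f xs rule: pbig.induct) auto

lemma fv_nsum: "fvN (nsum f xs) \<subseteq> (\<Union>i\<in>set xs. fvN (f i))"
  by (induct f xs rule: nsum.induct) auto

lemma step_nsum_intro: "i \<in> set xs \<Longrightarrow> step (f i) a \<mu> \<Longrightarrow> step (nsum f xs) a \<mu>"
  by (induct f xs rule: nsum.induct) (auto intro: step.intros)

lemma step_Plus: "step (Plus A B) a \<mu> \<longleftrightarrow> step A a \<mu> \<or> step B a \<mu>"
  by (auto elim: step.cases intro: step.intros)

lemma step_Pre: "step (Pre b P) a \<mu> \<longleftrightarrow> a = b \<and> \<mu> = pden P"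
  by (auto elim: step.cases intro: step.intros)

lemma step_Rec: "step (Rec Y G) a \<mu> \<longleftrightarrow> step (substN (Var(Y := Rec Y G)) G) a \<mu>"
  by (auto elim: step.cases intro: step.intros)

inductive stepn :: "nat \<Rightarrow> ('a, 'v) nexp \<Rightarrow> 'a act \<Rightarrow> ('a, 'v) nexp subdist \<Rightarrow> bool" where
  stepn_pre: "stepn n (Pre a P) a (pden P)"
| stepn_rec: "stepn n (substN (Var(X := Rec X E)) E) a \<mu> \<Longrightarrow> stepn (Suc n) (Rec X E) a \<mu>"
| stepn_plusL: "stepn n E a \<mu> \<Longrightarrow> stepn (Suc n) (Plus E F) a \<mu>"
| stepn_plusR: "stepn n E a \<mu> \<Longrightarrow> stepn (Suc n) (Plus F E) a \<mu>"

lemma step_stepn: "step t a \<mu> \<Longrightarrow> \<exists>n. stepn n t a \<mu>"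
  by (induct rule: step.induct) (auto intro: stepn.intros)

lemma stepn_step: "stepn n t a \<mu> \<Longrightarrow> step t a \<mu>"
  by (induct rule: stepn.induct) (auto intro: step.intros)

lemma stepn_Plus: "stepn n (Plus A B) a \<mu> \<Longrightarrow> \<exists>m<n. stepn m A a \<mu> \<or> stepn m B a \<mu>"
  by (auto elim: stepn.cases)

lemma stepn_Rec: "stepn n (Rec Y G) a \<mu> \<Longrightarrow> \<exists>m<n. stepn m (substN (Var(Y := Rec Y G)) G) a \<mu>"
  by (auto elim: stepn.cases)

lemma stepn_Pre: "stepn n (Pre b P) a \<mu> \<Longrightarrow> a = b \<and> \<mu> = pden P"
  by (auto elim: stepn.cases)

lemma stepn_Nil: "\<not> stepn n Nil a \<mu>"
  by (auto elim: stepn.cases)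

lemma stepn_Var: "\<not> stepn n (Var Z) a \<mu>"
  by (auto elim: stepn.cases)

lemma stepn_nsum: "stepn n (nsum f xs) a \<mu> \<Longrightarrow> \<exists>i\<in>set xs. \<exists>m\<le>n. stepn m (f i) a \<mu>"
proof (induct f xs arbitrary: n rule: nsum.induct)
  case (1 E) then show ?case by (simp add: stepn_Nil)
next
  case (2 E i) then show ?case by auto
next
  case (3 E i j "is")
  from stepn_Plus[OF 3(2)[simplified]] obtain m where m: "m < n"
    "stepn m (E i) a \<mu> \<or> stepn m (nsum E (j # is)) a \<mu>" by blast
  from m(2) show ?case
  proof
    assume "stepn m (E i) a \<mu>" then show ?thesis using m by auto
  next
    assume "stepn m (nsum E (j # is)) a \<mu>"
    from 3(1)[OF this] m show ?thesis by fastforce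
  qed
qed

lemma unfold_subst:
  assumes "\<forall>Z\<in>fvN (Rec Y H). closed (\<theta> Z)"
  shows "substN (Var(Y := Rec Y (substN (\<theta>(Y := Var Y)) H))) (substN (\<theta>(Y := Var Y)) H)
       = substN (\<theta>(Y := Rec Y (substN (\<theta>(Y := Var Y)) H))) H"
proof -
  let ?T = "Rec Y (substN (\<theta>(Y := Var Y)) H)"
  have "substN (Var(Y := ?T)) (substN (\<theta>(Y := Var Y)) H)
     = substN (\<lambda>Z. substN (Var(Y := ?T)) ((\<theta>(Y := Var Y)) Z)) H"
    using assms by (intro subst_comp(1)) auto
  also have "\<dots> = substN (\<theta>(Y := ?T)) H"
    using assms by (intro subst_cong(1)) (auto simp: subst_closed)
  finally show ?thesis .
qed

lemma lift_pden:
  "(\<forall>H. fvN H \<subseteq> fvP P \<longrightarrow> Q (substN \<theta>1 H) (substN \<theta>2 H)) \<Longrightarrow>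
   lift Q (pden (substP \<theta>1 P)) (pden (substP \<theta>2 P))"
proof (induct P rule: pden.induct)
  case (1 H)
  then show ?case by (auto intro: lift_base)
next
  case (2 P1 r P2)
  let ?r = "Rep_openprob r"
  have r: "0 < ?r" "?r < 1" using Rep_openprob[of r] by auto
  define w :: "nat \<Rightarrow> real" where "w = (\<lambda>k. if k = 0 then ?r else 1 - ?r)"
  have W: "weights {0::nat, 1} w" using r by (intro weights_fin) (auto simp: w_def)
  have l1: "lift Q (pden (substP \<theta>1 P1)) (pden (substP \<theta>2 P1))" using 2 by auto
  have l2: "lift Q (pden (substP \<theta>1 P2)) (pden (substP \<theta>2 P2))" using 2 by auto
  define m1 where "m1 = (\<lambda>k::nat. if k = 0 then pden (substP \<theta>1 P1) else pden (substP \<theta>1 P2))"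
  define m2 where "m2 = (\<lambda>k::nat. if k = 0 then pden (substP \<theta>2 P1) else pden (substP \<theta>2 P2))"
  have "lift Q (comb {0,1} w m1) (comb {0,1} w m2)"
    using l1 l2 by (intro lift_comb[OF W]) (auto simp: m1_def m2_def)
  moreover have "comb {0,1} w m1 = pden (substP \<theta>1 (PChoice P1 r P2))"
    by (simp add: comb_fin w_def m1_def)
  moreover have "comb {0,1} w m2 = pden (substP \<theta>2 (PChoice P1 r P2))"
    by (simp add: comb_fin w_def m2_def)
  ultimately show ?case by simp
qed

lemma sum_list_pos: "xs \<noteq> [] \<Longrightarrow> \<forall>i\<in>set xs. 0 < p i \<Longrightarrow> 0 < sum_list (map p xs :: real list)"
proof (induct xs)
  case (Cons a xs) then show ?case
    by (cases "xs = []") (auto intro: add_pos_pos)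
qed simp

lemma aux_frac: "(S::real) > 0 \<Longrightarrow> P > 0 \<Longrightarrow> S / (P + S) * (x / S * d) = x / (P + S) * d"
  by (simp add: divide_simps ac_simps)

lemma pden_pbig:
  "xs \<noteq> [] \<Longrightarrow> \<forall>i\<in>set xs. 0 < p i \<Longrightarrow>
   pden (pbig p T xs) = (\<lambda>s. \<Sum>n<length xs. (p (xs ! n) / sum_list (map p xs)) * dirac (T (xs ! n)) s)"
proof (induct p T xs rule: pbig.induct)
  case (1 p E) then show ?case by simp
next
  case (2 p E i) then show ?case by auto
next
  case (3 p E i j "is")
  let ?S = "sum_list (map p (j # is))"
  have Spos: "0 < ?S" using 3(3) by (intro sum_list_pos) auto
  have pi: "0 < p i" using 3(3) by auto
  let ?r = "p i / sum_list (map p (i # j # is))"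
  have r: "?r = p i / (p i + ?S)" by simp
  have r01: "0 < ?r" "?r < 1" using Spos pi by (auto simp: r)
  then have rep: "Rep_openprob (Abs_openprob ?r) = ?r"
    by (intro Abs_openprob_inverse) auto
  have IH: "pden (pbig p E (j # is)) = (\<lambda>s. \<Sum>n<length (j # is). (p ((j # is) ! n) / ?S) * dirac (E ((j # is) ! n)) s)"
    using 3 by auto
  show ?case
  proof
    fix s
    have "pden (pbig p E (i # j # is)) s = ?r * dirac (E i) s + (1 - ?r) * (\<Sum>n<length (j # is). (p ((j # is) ! n) / ?S) * dirac (E ((j # is) ! n)) s)"
      using rep IH by simp
    also have "(1 - ?r) = ?S / (p i + ?S)" using Spos pi by (simp add: r field_simps)
    also have "?r * dirac (E i) s + ?S / (p i + ?S) * (\<Sum>n<length (j # is). (p ((j # is) ! n) / ?S) * dirac (E ((j # is) ! n)) s)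
       = ?r * dirac (E i) s + (\<Sum>n<length (j # is). (p ((j # is) ! n) / (p i + ?S)) * dirac (E ((j # is) ! n)) s)"
    proof -
      have eq: "\<And>n. ?S / (p i + ?S) * ((p ((j # is) ! n) / ?S) * dirac (E ((j # is) ! n)) s)
          = (p ((j # is) ! n) / (p i + ?S)) * dirac (E ((j # is) ! n)) s"
        using Spos pi by (intro aux_frac) auto
      show ?thesis unfolding sum_distrib_left eq ..
    qed
    also have "\<dots> = (\<Sum>n<length (i # j # is). (p ((i # j # is) ! n) / sum_list (map p (i # j # is))) * dirac (E ((i # j # is) ! n)) s)"
      by (simp only: length_Cons sum.lessThan_Suc_shift) simp
    finally show "pden (pbig p E (i # j # is)) s = (\<Sum>n<length (i # j # is). (p ((i # j # is) ! n) / sum_list (map p (i # j # is))) * dirac (E ((i # j # is) ! n)) s)" .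
  qed
qed



locale setting =
  fixes p :: "'i \<Rightarrow> real" and e :: "'i \<Rightarrow> ('a, 'v) nexp" and f :: "('a, 'v) nexp"
    and X :: 'v and js :: "'i list"
  assumes pos: "\<forall>i\<in>set js. 0 < p i" and sum1: "sum_list (map p js) = 1"
    and fve: "\<forall>i\<in>set js. fvN (e i) \<subseteq> {X}" and fvf: "fvN f \<subseteq> {X}"
begin

definition "BL = Plus (Pre Tau (pbig p (\<lambda>i. Plus (Var X) (e i)) js)) f"
definition "BR = Plus (Plus (Pre Tau (Dirac (Var X))) (nsum e js)) f"
definition "Lt = Rec X BL"
definition "Rt = Rec X BR"
definition "EL i = substN (Var(X := Lt)) (e i)"
definition "ER i = substN (Var(X := Rt)) (e i)"
definition "FL = substN (Var(X := Lt)) f"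
definition "FR = substN (Var(X := Rt)) f"
definition "TL i = Plus Lt (EL i)"
definition "muL = pden (pbig p TL js)"
definition "N = length js"
definition "w n = p (js ! n)"

lemma js_ne: "js \<noteq> []" using sum1 by auto

lemma sum_w: "(\<Sum>n<N. w n) = 1"
  using sum1 by (simp add: sum_list_sum_nth N_def w_def atLeast0LessThan)

lemma w_pos: "n < N \<Longrightarrow> 0 < w n"
  using pos by (simp add: w_def N_def)

lemma closed_Lt: "closed Lt"
proof -
  have h: "fvP (pbig p (\<lambda>i. Plus (Var X) (e i)) js) \<subseteq> (\<Union>i\<in>set js. fvN (Plus (Var X) (e i)))"
    by (rule fv_pbig)
  have "fvP (pbig p (\<lambda>i. Plus (Var X) (e i)) js) \<subseteq> {X}"
    using h fve by fastforce
  then show ?thesis using fvf by (auto simp: closed_def Lt_def BL_def)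
qed

lemma closed_Rt: "closed Rt"
proof -
  have h: "fvN (nsum e js) \<subseteq> (\<Union>i\<in>set js. fvN (e i))"
    by (rule fv_nsum)
  have "fvN (nsum e js) \<subseteq> {X}"
    using h fve by fastforce
  then show ?thesis using fvf by (auto simp: closed_def Rt_def BR_def)
qed

lemma closed_sub: "fvN H \<subseteq> {X} \<Longrightarrow> closed T \<Longrightarrow> closed (substN (Var(X := T)) H)"
proof -
  assume a: "fvN H \<subseteq> {X}" "closed T"
  have "fvN (substN (Var(X := T)) H) \<subseteq> (\<Union>Y\<in>fvN H. fvN ((Var(X := T)) Y))" by (rule fv_subst)
  also have "\<dots> \<subseteq> {}" using a by (auto simp: closed_def)
  finally show ?thesis by (simp add: closed_def)
qed

lemma closed_EL: "i \<in> set js \<Longrightarrow> closed (EL i)"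
  unfolding EL_def by (rule closed_sub) (use fve closed_Lt in auto)

lemma closed_TL: "i \<in> set js \<Longrightarrow> closed (TL i)"
  using closed_EL closed_Lt by (auto simp: TL_def closed_def)

lemma TL_abs: "TL = (\<lambda>i. Plus Lt (substN (Var(X := Lt)) (e i)))"
  by (auto simp: TL_def EL_def)

lemma ER_abs: "ER = (\<lambda>i. substN (Var(X := Rt)) (e i))"
  by (auto simp: ER_def)

lemma unfoldL: "substN (Var(X := Lt)) BL = Plus (Pre Tau (pbig p TL js)) FL"
  by (simp add: BL_def substP_pbig TL_abs FL_def)

lemma unfoldR: "substN (Var(X := Rt)) BR = Plus (Plus (Pre Tau (Dirac Rt)) (nsum ER js)) FR"
  by (simp add: BR_def substN_nsum ER_abs FR_def)

lemma stepL: "step Lt a \<mu> \<longleftrightarrow> (a = Tau \<and> \<mu> = muL) \<or> step FL a \<mu>"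
proof -
  have "step Lt a \<mu> \<longleftrightarrow> step (substN (Var(X := Lt)) BL) a \<mu>"
    using step_Rec[of X BL a \<mu>] by (simp add: Lt_def[symmetric])
  then show ?thesis by (simp add: unfoldL step_Plus step_Pre muL_def)
qed

lemma stepR: "step Rt a \<mu> \<longleftrightarrow> (a = Tau \<and> \<mu> = dirac Rt) \<or> (\<exists>i\<in>set js. step (ER i) a \<mu>) \<or> step FR a \<mu>"
proof -
  have "step Rt a \<mu> \<longleftrightarrow> step (substN (Var(X := Rt)) BR) a \<mu>"
    using step_Rec[of X BR a \<mu>] by (simp add: Rt_def[symmetric])
  moreover have "step (nsum ER js) a \<mu> \<longleftrightarrow> (\<exists>i\<in>set js. step (ER i) a \<mu>)"
    using step_nsum_intro stepn_nsum step_stepn stepn_step by metis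
  ultimately show ?thesis by (simp add: unfoldR step_Plus step_Pre)
qed

lemma stepnL: "stepn n Lt a \<mu> \<Longrightarrow> (a = Tau \<and> \<mu> = muL) \<or> (\<exists>m<n. stepn m FL a \<mu>)"
proof -
  assume "stepn n Lt a \<mu>"
  then obtain m1 where m1: "m1 < n" "stepn m1 (substN (Var(X := Lt)) BL) a \<mu>"
    using stepn_Rec[of n X BL a \<mu>] by (auto simp: Lt_def[symmetric])
  then obtain m2 where m2: "m2 < m1" "stepn m2 (Pre Tau (pbig p TL js)) a \<mu> \<or> stepn m2 FL a \<mu>"
    using stepn_Plus unfoldL by metis
  then show ?thesis using m1 stepn_Pre muL_def by (metis order.strict_trans)
qed

lemma stepnR: "stepn n Rt a \<mu> \<Longrightarrow> (a = Tau \<and> \<mu> = dirac Rt) \<or> (\<exists>i\<in>set js. \<exists>m<n. stepn m (ER i) a \<mu>)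
    \<or> (\<exists>m<n. stepn m FR a \<mu>)"
proof -
  assume "stepn n Rt a \<mu>"
  then obtain m1 where m1: "m1 < n" "stepn m1 (substN (Var(X := Rt)) BR) a \<mu>"
    using stepn_Rec[of n X BR a \<mu>] by (auto simp: Rt_def[symmetric])
  then obtain m2 where m2: "m2 < m1" "stepn m2 (Plus (Pre Tau (Dirac Rt)) (nsum ER js)) a \<mu> \<or> stepn m2 FR a \<mu>"
    using stepn_Plus unfoldR by metis
  from m2(2) show ?thesis
  proof
    assume "stepn m2 (Plus (Pre Tau (Dirac Rt)) (nsum ER js)) a \<mu>"
    then obtain m3 where m3: "m3 < m2" "stepn m3 (Pre Tau (Dirac Rt)) a \<mu> \<or> stepn m3 (nsum ER js) a \<mu>"
      using stepn_Plus by metis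
    from m3(2) show ?thesis
    proof
      assume "stepn m3 (Pre Tau (Dirac Rt)) a \<mu>" then show ?thesis using stepn_Pre by fastforce
    next
      assume "stepn m3 (nsum ER js) a \<mu>"
      then obtain i m4 where "i \<in> set js" "m4 \<le> m3" "stepn m4 (ER i) a \<mu>" using stepn_nsum by metis
      then show ?thesis using m1 m2 m3 by (meson le_less_trans order.strict_trans)
    qed
  next
    assume "stepn m2 FR a \<mu>" then show ?thesis using m1 m2 by (meson order.strict_trans)
  qed
qed

lemma muL_eq: "muL = (\<lambda>s. \<Sum>n<N. w n * dirac (TL (js ! n)) s)"
  unfolding muL_def using pden_pbig[OF js_ne pos, of TL] sum1 by (simp add: N_def w_def)

lemma step_TL_tau: "step (TL i) Tau muL"
  unfolding TL_def by (rule step_plusL) (simp add: stepL)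

lemma step_TL_E: "step (EL i) a \<mu> \<Longrightarrow> step (TL i) a \<mu>"
  unfolding TL_def by (rule step_plusR)

end


context setting begin

inductive rel :: "('a, 'v) nexp \<Rightarrow> ('a, 'v) nexp \<Rightarrow> bool" where
  relI: "(\<forall>Z\<in>fvN H. (\<theta>1 Z = Lt \<and> \<theta>2 Z = Rt) \<or> rel (\<theta>1 Z) (\<theta>2 Z)) \<Longrightarrow> rel (substN \<theta>1 H) (substN \<theta>2 H)"


lemma rel_closed: "rel t t' \<Longrightarrow> closed t \<and> closed t'"
proof (induct rule: rel.induct)
  case (relI H \<theta>1 \<theta>2)
  have c: "\<forall>Z\<in>fvN H. closed (\<theta>1 Z) \<and> closed (\<theta>2 Z)" using relI closed_Lt closed_Rt by fastforce
  have "fvN (substN \<theta>1 H) \<subseteq> (\<Union>Y\<in>fvN H. fvN (\<theta>1 Y))" by (rule fv_subst)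
  moreover have "fvN (substN \<theta>2 H) \<subseteq> (\<Union>Y\<in>fvN H. fvN (\<theta>2 Y))" by (rule fv_subst)
  ultimately show ?case using c by (auto simp: closed_def)
qed

lemma rel_sub:
  assumes "\<forall>Z\<in>fvN H. (\<theta>1 Z = Lt \<and> \<theta>2 Z = Rt) \<or> rel (\<theta>1 Z) (\<theta>2 Z)" "fvN H' \<subseteq> fvN H"
  shows "rel (substN \<theta>1 H') (substN \<theta>2 H')"
  using assms by (intro relI) blast

lemma theta_closed:
  assumes "\<forall>Z\<in>fvN H. (\<theta>1 Z = Lt \<and> \<theta>2 Z = Rt) \<or> rel (\<theta>1 Z) (\<theta>2 Z)" "Z \<in> fvN H"
  shows "closed (\<theta>1 Z) \<and> closed (\<theta>2 Z)"
  using assms rel_closed closed_Lt closed_Rt by metis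

lemma rel_ctx: "fvN H \<subseteq> {X} \<Longrightarrow> rel (substN (Var(X := Lt)) H) (substN (Var(X := Rt)) H)"
  by (intro relI) auto

lemma rel_LR: "rel Lt Rt"
  using rel_ctx[of "Var X"] by simp

lemma rel_F: "rel FL FR"
  unfolding FL_def FR_def using fvf by (rule rel_ctx)

lemma rel_E: "i \<in> set js \<Longrightarrow> rel (EL i) (ER i)"
  unfolding EL_def ER_def using fve by (intro rel_ctx) auto

definition "SS t t' \<longleftrightarrow> rel t t' \<or> (\<exists>i\<in>set js. t = TL i \<and> t' = Rt)"

lemma lift_muL: "lift SS muL (dirac Rt)"
proof -
  have W: "weights {..<N} w" using w_pos sum_w by (intro weights_fin) (auto simp: less_imp_le)
  have "lift SS (comb {..<N} w (\<lambda>n. dirac (TL (js ! n)))) (comb {..<N} w (\<lambda>n. dirac Rt))"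
  proof (rule lift_comb[OF W], intro ballI lift_base)
    fix n assume "n \<in> {..<N}"
    then have "js ! n \<in> set js" by (simp add: N_def)
    then show "SS (TL (js ! n)) Rt" unfolding SS_def by blast
  qed
  moreover have "comb {..<N} w (\<lambda>n. dirac (TL (js ! n))) = muL" by (simp add: comb_fin muL_eq)
  moreover have "comb {..<N} w (\<lambda>n. dirac Rt) = dirac Rt"
    by (simp add: comb_fin sum_distrib_right[symmetric] sum_w)
  ultimately show ?thesis by simp
qed

lemma step_Rt_tau: "step Rt Tau (dirac Rt)" by (simp add: stepR)

end


context setting begin

lemma fwd: "stepn n t a \<mu> \<Longrightarrow> rel t t' \<Longrightarrow> \<exists>\<nu>. step t' a \<nu> \<and> lift SS \<mu> \<nu>"
proof (induct n arbitrary: t t' a \<mu> rule: less_induct)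
  case (less n)
  have "rel t t' \<Longrightarrow> \<forall>a \<mu>. stepn n t a \<mu> \<longrightarrow> (\<exists>\<nu>. step t' a \<nu> \<and> lift SS \<mu> \<nu>)" for t t'
  proof (induct rule: rel.induct)
    case (relI H \<theta>1 \<theta>2)
    have P: "\<forall>Z\<in>fvN H. (\<theta>1 Z = Lt \<and> \<theta>2 Z = Rt) \<or> rel (\<theta>1 Z) (\<theta>2 Z)" using relI by blast
    show ?case
    proof (intro allI impI)
      fix a \<mu> assume st: "stepn n (substN \<theta>1 H) a \<mu>"
      show "\<exists>\<nu>. step (substN \<theta>2 H) a \<nu> \<and> lift SS \<mu> \<nu>"
      proof (cases H)
        case Nil then show ?thesis using st stepn_Nil by fastforce
      next
        case (Var Z)
        then have Z: "Z \<in> fvN H" by simp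
        from relI Z have "(\<theta>1 Z = Lt \<and> \<theta>2 Z = Rt) \<or> (rel (\<theta>1 Z) (\<theta>2 Z) \<and>
            (\<forall>a \<mu>. stepn n (\<theta>1 Z) a \<mu> \<longrightarrow> (\<exists>\<nu>. step (\<theta>2 Z) a \<nu> \<and> lift SS \<mu> \<nu>)))" by blast
        then show ?thesis
        proof
          assume LR: "\<theta>1 Z = Lt \<and> \<theta>2 Z = Rt"
          then have "stepn n Lt a \<mu>" using st Var by simp
          from stepnL[OF this] show ?thesis
          proof
            assume "a = Tau \<and> \<mu> = muL"
            then show ?thesis using LR Var step_Rt_tau lift_muL by auto
          next
            assume "\<exists>m<n. stepn m FL a \<mu>"
            then obtain m where "m < n" "stepn m FL a \<mu>" by blast
            from less.hyps[OF this rel_F] obtain \<nu> where "step FR a \<nu>" "lift SS \<mu> \<nu>" by blast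
            then show ?thesis using LR Var by (auto simp: stepR)
          qed
        next
          assume "rel (\<theta>1 Z) (\<theta>2 Z) \<and>
            (\<forall>a \<mu>. stepn n (\<theta>1 Z) a \<mu> \<longrightarrow> (\<exists>\<nu>. step (\<theta>2 Z) a \<nu> \<and> lift SS \<mu> \<nu>))"
          then show ?thesis using st Var by auto
        qed
      next
        case (Pre b P)
        from st Pre have ab: "a = b" "\<mu> = pden (substP \<theta>1 P)" using stepn_Pre[of n b "substP \<theta>1 P" a \<mu>] by auto
        have "lift SS (pden (substP \<theta>1 P)) (pden (substP \<theta>2 P))"
        proof (rule lift_pden, intro allI impI)
          fix H' :: "('a, 'v) nexp" assume "fvN H' \<subseteq> fvP P"
          then have "rel (substN \<theta>1 H') (substN \<theta>2 H')" using Pre by (intro rel_sub[OF P]) auto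
          then show "SS (substN \<theta>1 H') (substN \<theta>2 H')" by (simp add: SS_def)
        qed
        then show ?thesis using ab Pre by (auto intro: step_pre)
      next
        case (Plus H1 H2)
        from st Plus obtain m where m: "m < n" "stepn m (substN \<theta>1 H1) a \<mu> \<or> stepn m (substN \<theta>1 H2) a \<mu>"
          using stepn_Plus by fastforce
        have r1: "rel (substN \<theta>1 H1) (substN \<theta>2 H1)" using Plus by (intro rel_sub[OF P]) auto
        have r2: "rel (substN \<theta>1 H2) (substN \<theta>2 H2)" using Plus by (intro rel_sub[OF P]) auto
        from m(2) show ?thesis
        proof
          assume "stepn m (substN \<theta>1 H1) a \<mu>"
          from less.hyps[OF m(1) this r1] show ?thesis using Plus by (auto intro: step_plusL)
        next
          assume "stepn m (substN \<theta>1 H2) a \<mu>"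
          from less.hyps[OF m(1) this r2] show ?thesis using Plus by (auto intro: step_plusR)
        qed
      next
        case (Rec Y H1)
        define T1 where "T1 = Rec Y (substN (\<theta>1(Y := Var Y)) H1)"
        define T2 where "T2 = Rec Y (substN (\<theta>2(Y := Var Y)) H1)"
        have T1e: "T1 = substN \<theta>1 H" and T2e: "T2 = substN \<theta>2 H" by (simp_all add: Rec T1_def T2_def)
        have rt: "rel T1 T2" unfolding T1e T2e by (rule rel.relI[OF P])
        have cl1: "\<forall>Z\<in>fvN (Rec Y H1). closed (\<theta>1 Z)" and cl2: "\<forall>Z\<in>fvN (Rec Y H1). closed (\<theta>2 Z)"
          using theta_closed[OF P] Rec by blast+
        have st': "stepn n (Rec Y (substN (\<theta>1(Y := Var Y)) H1)) a \<mu>" using st Rec by simp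
        obtain m where m: "m < n" "stepn m (substN (Var(Y := T1)) (substN (\<theta>1(Y := Var Y)) H1)) a \<mu>"
          using stepn_Rec[OF st'] unfolding T1_def by blast
        then have m2: "stepn m (substN (\<theta>1(Y := T1)) H1) a \<mu>"
          using unfold_subst[OF cl1] by (simp add: T1_def)
        have r: "rel (substN (\<theta>1(Y := T1)) H1) (substN (\<theta>2(Y := T2)) H1)"
          by (intro rel.relI) (use P Rec rt in auto)
        from less.hyps[OF m(1) m2 r] obtain \<nu> where nu: "step (substN (\<theta>2(Y := T2)) H1) a \<nu>" "lift SS \<mu> \<nu>"
          by blast
        have "step T2 a \<nu>" using nu(1) unfold_subst[OF cl2] unfolding T2_def step_Rec by simp
        then show ?thesis using nu(2) T2e by auto
      qed
    qed
  qed
  then show ?case using less.prems by blast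
qed

definition "bm t a \<mu> \<longleftrightarrow> step t a \<mu> \<or> (step t Tau muL \<and> (\<exists>j\<in>set js. step (EL j) a \<mu>))"

lemma bm_plusL: "bm A a \<mu> \<Longrightarrow> bm (Plus A B) a \<mu>"
  unfolding bm_def by (auto intro: step_plusL)

lemma bm_plusR: "bm B a \<mu> \<Longrightarrow> bm (Plus A B) a \<mu>"
  unfolding bm_def by (auto intro: step_plusR)

lemma bm_rec: "bm (substN (Var(Y := Rec Y G)) G) a \<mu> \<Longrightarrow> bm (Rec Y G) a \<mu>"
  unfolding bm_def by (auto intro: step_rec)

lemma bm_E: "bm (EL i) a \<mu> \<Longrightarrow> i \<in> set js \<Longrightarrow> \<exists>j\<in>set js. step (EL j) a \<mu>"
  unfolding bm_def by auto

lemma bwd: "stepn n t' a \<nu> \<Longrightarrow> rel t t' \<Longrightarrow> \<exists>\<mu>. lift SS \<mu> \<nu> \<and> bm t a \<mu>"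
proof (induct n arbitrary: t t' a \<nu> rule: less_induct)
  case (less n)
  have "rel t t' \<Longrightarrow> \<forall>a \<nu>. stepn n t' a \<nu> \<longrightarrow> (\<exists>\<mu>. lift SS \<mu> \<nu> \<and> bm t a \<mu>)" for t t'
  proof (induct rule: rel.induct)
    case (relI H \<theta>1 \<theta>2)
    have P: "\<forall>Z\<in>fvN H. (\<theta>1 Z = Lt \<and> \<theta>2 Z = Rt) \<or> rel (\<theta>1 Z) (\<theta>2 Z)" using relI by blast
    show ?case
    proof (intro allI impI)
      fix a \<nu> assume st: "stepn n (substN \<theta>2 H) a \<nu>"
      show "\<exists>\<mu>. lift SS \<mu> \<nu> \<and> bm (substN \<theta>1 H) a \<mu>"
      proof (cases H)
        case Nil then show ?thesis using st stepn_Nil by fastforce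
      next
        case (Var Z)
        then have Z: "Z \<in> fvN H" by simp
        from relI Z have "(\<theta>1 Z = Lt \<and> \<theta>2 Z = Rt) \<or> (rel (\<theta>1 Z) (\<theta>2 Z) \<and>
            (\<forall>a \<nu>. stepn n (\<theta>2 Z) a \<nu> \<longrightarrow> (\<exists>\<mu>. lift SS \<mu> \<nu> \<and> bm (\<theta>1 Z) a \<mu>)))" by blast
        then show ?thesis
        proof
          assume LR: "\<theta>1 Z = Lt \<and> \<theta>2 Z = Rt"
          have tauL: "step Lt Tau muL" by (simp add: stepL)
          have "stepn n Rt a \<nu>" using st Var LR by simp
          from stepnR[OF \<open>stepn n Rt a \<nu>\<close>] show ?thesis
          proof (elim disjE)
            assume "a = Tau \<and> \<nu> = dirac Rt"
            then show ?thesis using LR Var lift_muL tauL by (auto simp: bm_def)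
          next
            assume "\<exists>i\<in>set js. \<exists>m<n. stepn m (ER i) a \<nu>"
            then obtain i m where i: "i \<in> set js" "m < n" "stepn m (ER i) a \<nu>" by blast
            from less.hyps[OF i(2) i(3) rel_E[OF i(1)]] obtain \<mu> where mu: "lift SS \<mu> \<nu>" "bm (EL i) a \<mu>"
              by blast
            from bm_E[OF mu(2) i(1)] have "bm Lt a \<mu>" using tauL by (simp add: bm_def)
            then show ?thesis using mu LR Var by auto
          next
            assume "\<exists>m<n. stepn m FR a \<nu>"
            then obtain m where m: "m < n" "stepn m FR a \<nu>" by blast
            from less.hyps[OF m rel_F] obtain \<mu> where mu: "lift SS \<mu> \<nu>" "bm FL a \<mu>"
              by blast
            have "bm Lt a \<mu>" using mu(2) unfolding bm_def stepL by blast
            then show ?thesis using mu LR Var by auto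
          qed
        next
          assume "rel (\<theta>1 Z) (\<theta>2 Z) \<and>
            (\<forall>a \<nu>. stepn n (\<theta>2 Z) a \<nu> \<longrightarrow> (\<exists>\<mu>. lift SS \<mu> \<nu> \<and> bm (\<theta>1 Z) a \<mu>))"
          then show ?thesis using st Var by auto
        qed
      next
        case (Pre b P)
        from st Pre have ab: "a = b" "\<nu> = pden (substP \<theta>2 P)" using stepn_Pre[of n b "substP \<theta>2 P" a \<nu>] by auto
        have "lift SS (pden (substP \<theta>1 P)) (pden (substP \<theta>2 P))"
        proof (rule lift_pden, intro allI impI)
          fix H' :: "('a, 'v) nexp" assume "fvN H' \<subseteq> fvP P"
          then have "rel (substN \<theta>1 H') (substN \<theta>2 H')" using Pre by (intro rel_sub[OF P]) auto
          then show "SS (substN \<theta>1 H') (substN \<theta>2 H')" by (simp add: SS_def)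
        qed
        then show ?thesis using ab Pre by (auto intro: step_pre simp: bm_def)
      next
        case (Plus H1 H2)
        from st Plus obtain m where m: "m < n" "stepn m (substN \<theta>2 H1) a \<nu> \<or> stepn m (substN \<theta>2 H2) a \<nu>"
          using stepn_Plus by fastforce
        have r1: "rel (substN \<theta>1 H1) (substN \<theta>2 H1)" using Plus by (intro rel_sub[OF P]) auto
        have r2: "rel (substN \<theta>1 H2) (substN \<theta>2 H2)" using Plus by (intro rel_sub[OF P]) auto
        from m(2) show ?thesis
        proof
          assume "stepn m (substN \<theta>2 H1) a \<nu>"
          from less.hyps[OF m(1) this r1] show ?thesis using Plus by (auto intro: bm_plusL)
        next
          assume "stepn m (substN \<theta>2 H2) a \<nu>"
          from less.hyps[OF m(1) this r2] show ?thesis using Plus by (auto intro: bm_plusR)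
        qed
      next
        case (Rec Y H1)
        define T1 where "T1 = Rec Y (substN (\<theta>1(Y := Var Y)) H1)"
        define T2 where "T2 = Rec Y (substN (\<theta>2(Y := Var Y)) H1)"
        have T1e: "T1 = substN \<theta>1 H" and T2e: "T2 = substN \<theta>2 H" by (simp_all add: Rec T1_def T2_def)
        have rt: "rel T1 T2" unfolding T1e T2e by (rule rel.relI[OF P])
        have cl1: "\<forall>Z\<in>fvN (Rec Y H1). closed (\<theta>1 Z)" and cl2: "\<forall>Z\<in>fvN (Rec Y H1). closed (\<theta>2 Z)"
          using theta_closed[OF P] Rec by blast+
        have st': "stepn n (Rec Y (substN (\<theta>2(Y := Var Y)) H1)) a \<nu>" using st Rec by simp
        obtain m where m: "m < n" "stepn m (substN (Var(Y := T2)) (substN (\<theta>2(Y := Var Y)) H1)) a \<nu>"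
          using stepn_Rec[OF st'] unfolding T2_def by blast
        then have m2: "stepn m (substN (\<theta>2(Y := T2)) H1) a \<nu>"
          using unfold_subst[OF cl2] by (simp add: T2_def)
        have r: "rel (substN (\<theta>1(Y := T1)) H1) (substN (\<theta>2(Y := T2)) H1)"
          by (intro rel.relI) (use P Rec rt in auto)
        from less.hyps[OF m(1) m2 r] obtain \<mu> where mu: "lift SS \<mu> \<nu>" "bm (substN (\<theta>1(Y := T1)) H1) a \<mu>"
          by blast
        have "bm T1 a \<mu>" unfolding T1_def using mu(2) unfold_subst[OF cl1] by (intro bm_rec) (simp add: T1_def)
        then show ?thesis using mu(1) T1e by auto
      qed
    qed
  qed
  then show ?case using less.prems by blast
qed

end


lemma geo_has_sum:
  assumes q: "0 \<le> (q::real)" "q < 1" and pi: "\<pi> = 1 - q"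
  shows "((\<lambda>i. (if i < d then 0 else q ^ (i - d) * \<pi>)) has_sum 1) UNIV"
proof -
  let ?g = "\<lambda>i::nat. (if i < d then 0 else q ^ (i - d) * \<pi>)"
  have "(\<lambda>i. q ^ i) sums (1 / (1 - q))" using q by (intro geometric_sums) simp
  then have "(\<lambda>i. q ^ i * \<pi>) sums (1 / (1 - q) * \<pi>)" by (rule sums_mult2)
  then have s: "(\<lambda>i. q ^ i * \<pi>) sums 1" using q pi by simp
  have eq: "(\<lambda>i. ?g (i + d)) = (\<lambda>i. q ^ i * \<pi>)" by auto
  from s have "(\<lambda>i. ?g (i + d)) sums 1" by (simp only: eq)
  then have "?g sums (1 + (\<Sum>i<d. ?g i))" by (rule sums_iff_shift[THEN iffD1])
  then have "?g sums 1" by simp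
  then show ?thesis using q pi by (intro sums_nonneg_imp_has_sum) auto
qed

lemma geo_infsum:
  assumes "0 \<le> (q::real)" "q < 1" "\<pi> = 1 - q"
  shows "(\<Sum>\<^sub>\<infinity>i. (if i < d then 0 else q ^ (i - d) * \<pi>) * c) = c"
  using has_sum_cmult_left[OF geo_has_sum[OF assms, of d], of c] by (simp add: infsumI)

context setting begin

definition "st n = TL (js ! n)"

lemma step_st: "step (st n) Tau muL"
  by (simp add: st_def step_TL_tau)

lemma muL_st: "muL = (\<lambda>x. \<Sum>n<N. w n * dirac (st n) x)"
  by (simp add: muL_eq st_def)

lemma psd_muL: "psd muL 1"
  by (simp add: muL_def psd_pden)

context
  fixes k assumes k: "k \<in> set js"
begin

definition "u = TL k"
definition "pp = (\<Sum>n<N. if st n = u then w n else 0)"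
definition "qq = (\<Sum>n<N. if st n = u then 0 else w n)"
definition "nu' = (\<lambda>x. \<Sum>n<N. (if st n = u then 0 else w n) * dirac (st n) x)"

lemma pq: "pp + qq = 1"
proof -
  have "pp + qq = (\<Sum>n<N. (if st n = u then w n else 0) + (if st n = u then 0 else w n))"
    by (simp add: pp_def qq_def sum.distrib)
  also have "\<dots> = (\<Sum>n<N. w n)" by (rule sum.cong) auto
  finally show ?thesis using sum_w by simp
qed

lemma qq_nonneg: "0 \<le> qq"
  unfolding qq_def using w_pos by (intro sum_nonneg) (auto simp: less_imp_le)

lemma pp_pos: "0 < pp"
proof -
  obtain n0 where n0: "n0 < N" "js ! n0 = k" using k by (auto simp: in_set_conv_nth N_def)
  have "(if st n0 = u then w n0 else 0) \<le> pp"
    unfolding pp_def using n0 w_pos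
    by (intro member_le_sum[where f="\<lambda>n. if st n = u then w n else 0"]) (auto simp: less_imp_le)
  moreover have "st n0 = u" using n0 by (simp add: st_def u_def)
  ultimately show ?thesis using w_pos[OF n0(1)] by simp
qed

lemma qq_less: "qq < 1" using pq pp_pos by simp

lemma muL_split: "muL x = nu' x + pp * dirac u x"
proof -
  have "muL x = (\<Sum>n<N. (if st n = u then 0 else w n) * dirac (st n) x + (if st n = u then w n else 0) * dirac u x)"
    unfolding muL_st by (rule sum.cong) auto
  then show ?thesis by (simp add: sum.distrib nu'_def pp_def sum_distrib_right)
qed

lemma psd_nu': "psd nu' qq"
proof -
  have "psd (\<lambda>x. \<Sum>n<N. (if st n = u then 0 else w n) * dirac (st n) x) (\<Sum>n<N. (if st n = u then 0 else w n) * 1)"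
    using w_pos psd_dirac by (intro psd_sum) (auto simp: less_imp_le)
  then show ?thesis by (simp add: nu'_def qq_def)
qed

lemma pow_le1: "qq ^ i \<le> 1" using qq_nonneg qq_less by (simp add: power_le_one)

lemma keyW:
  assumes s0: "step s0 Tau muL"
  shows "tau_star (dirac s0) (dirac u)"
proof -
  define g :: "nat \<Rightarrow> real" where "g = (\<lambda>i. if i < 1 then 0 else qq ^ (i - 1) * pp)"
  define mt where "mt = (\<lambda>i::nat. if i = 0 then dirac s0 else (\<lambda>x. qq ^ (i - 1) * nu' x))"
  define mx where "mx = (\<lambda>i::nat. (\<lambda>x. g i * dirac u x))"
  have 1: "\<forall>i. is_subdist (mt i) \<and> is_subdist (mx i)"
  proof
    fix i
    have "is_subdist (mt i)"
    proof (cases "i = 0")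
      case True then show ?thesis using psd_subdist[OF psd_dirac] by (simp add: mt_def)
    next
      case False
      have "psd (\<lambda>x. qq ^ (i - 1) * nu' x) (qq ^ (i - 1) * qq)"
        using psd_nu' qq_nonneg by (intro psd_scale) auto
      moreover have "qq ^ (i - 1) * qq \<le> 1" using pow_le1 qq_nonneg qq_less
        by (meson less_imp_le mult_le_one zero_le_power)
      ultimately show ?thesis using False psd_subdist by (simp add: mt_def)
    qed
    moreover have "is_subdist (mx i)"
    proof -
      have g: "0 \<le> g i" "g i \<le> 1" using pow_le1[of "i - 1"] qq_nonneg pp_pos pq
        by (auto simp: g_def intro!: mult_le_one)
      have "psd (\<lambda>x. g i * dirac u x) (g i * 1)" using g by (intro psd_scale psd_dirac) auto
      then show ?thesis using g psd_subdist by (simp add: mx_def)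
    qed
    ultimately show "is_subdist (mt i) \<and> is_subdist (mx i)" by simp
  qed
  have 2: "\<forall>i. ctrans (mt i) Tau (\<lambda>x. mt (Suc i) x + mx (Suc i) x)"
  proof
    fix i show "ctrans (mt i) Tau (\<lambda>x. mt (Suc i) x + mx (Suc i) x)"
    proof (cases i)
      case 0
      have "(\<lambda>x. mt (Suc i) x + mx (Suc i) x) = muL"
        using 0 by (auto simp: mt_def mx_def g_def muL_split)
      then show ?thesis using 0 ctrans_base[OF s0] by (simp add: mt_def)
    next
      case (Suc j)
      have c: "ctrans (\<lambda>x. \<Sum>n<N. (qq ^ j * (if st n = u then 0 else w n)) * dirac (st n) x) Tau
                 (\<lambda>x. \<Sum>n<N. (qq ^ j * (if st n = u then 0 else w n)) * muL x)"
      proof (rule ctrans_fin)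
        show "\<forall>n\<in>{..<N}. 0 \<le> qq ^ j * (if st n = u then 0 else w n)"
          using qq_nonneg w_pos by (auto simp: less_imp_le)
        have "(\<Sum>n<N. qq ^ j * (if st n = u then 0 else w n)) = qq ^ j * qq"
          by (simp add: qq_def sum_distrib_left)
        also have "\<dots> \<le> 1" using pow_le1 qq_nonneg qq_less
          by (meson less_imp_le mult_le_one zero_le_power)
        finally show "(\<Sum>n<N. qq ^ j * (if st n = u then 0 else w n)) \<le> 1" .
      qed (auto simp: step_st)
      have e1: "(\<lambda>x. \<Sum>n<N. (qq ^ j * (if st n = u then 0 else w n)) * dirac (st n) x) = mt i"
        using Suc by (auto simp: mt_def nu'_def sum_distrib_left mult.assoc)
      have e2: "(\<lambda>x. \<Sum>n<N. (qq ^ j * (if st n = u then 0 else w n)) * muL x) = (\<lambda>x. mt (Suc i) x + mx (Suc i) x)"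
      proof
        fix x
        have "(\<Sum>n<N. (qq ^ j * (if st n = u then 0 else w n)) * muL x) = qq ^ j * qq * muL x"
          by (simp add: qq_def sum_distrib_left sum_distrib_right)
        also have "\<dots> = qq ^ j * qq * nu' x + qq ^ j * qq * pp * dirac u x"
          by (simp add: muL_split algebra_simps)
        also have "\<dots> = mt (Suc i) x + mx (Suc i) x"
          using Suc by (simp add: mt_def mx_def g_def algebra_simps)
        finally show "(\<Sum>n<N. (qq ^ j * (if st n = u then 0 else w n)) * muL x) = mt (Suc i) x + mx (Suc i) x" .
      qed
      show ?thesis using c unfolding e1 e2 .
    qed
  qed
  have 3: "dirac s0 = (\<lambda>x. mt 0 x + mx 0 x)" by (simp add: mt_def mx_def g_def)
  have 4: "dirac u = (\<lambda>x. \<Sum>\<^sub>\<infinity>i. mx i x)"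
  proof
    fix x
    have "(\<Sum>\<^sub>\<infinity>i. mx i x) = (\<Sum>\<^sub>\<infinity>i. (if i < 1 then 0 else qq ^ (i - 1) * pp) * dirac u x)"
      by (simp add: mx_def g_def)
    also have "\<dots> = dirac u x" using qq_nonneg qq_less pq by (intro geo_infsum) auto
    finally show "dirac u x = (\<Sum>\<^sub>\<infinity>i. mx i x)" by simp
  qed
  show ?thesis unfolding tau_star_def using 1 2 3 4 by blast
qed

lemma keyT:
  assumes s0: "step s0 Tau muL" and su: "step u Tau \<mu>"
  shows "tau_star (dirac s0) \<mu>"
proof -
  define g :: "nat \<Rightarrow> real" where "g = (\<lambda>i. if i < 2 then 0 else qq ^ (i - 2) * pp)"
  define mt where "mt = (\<lambda>i::nat. if i = 0 then dirac s0 else (\<lambda>x. qq ^ (i - 1) * muL x))"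
  define mx where "mx = (\<lambda>i::nat. (\<lambda>x. g i * \<mu> x))"
  have pmu: "psd \<mu> 1" using step_psd[OF su] .
  have 1: "\<forall>i. is_subdist (mt i) \<and> is_subdist (mx i)"
  proof
    fix i
    have "is_subdist (mt i)"
    proof (cases "i = 0")
      case True then show ?thesis using psd_subdist[OF psd_dirac] by (simp add: mt_def)
    next
      case False
      have "psd (\<lambda>x. qq ^ (i - 1) * muL x) (qq ^ (i - 1) * 1)"
        using psd_muL qq_nonneg by (intro psd_scale) auto
      then have "is_subdist (\<lambda>x. qq ^ (i - 1) * muL x)" using pow_le1[of "i - 1"] psd_subdist by simp
      then show ?thesis using False by (simp add: mt_def)
    qed
    moreover have "is_subdist (mx i)"
    proof -
      have g: "0 \<le> g i" "g i \<le> 1" using pow_le1[of "i - 2"] qq_nonneg pp_pos pq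
        by (auto simp: g_def intro!: mult_le_one)
      have "psd (\<lambda>x. g i * \<mu> x) (g i * 1)" using g pmu by (intro psd_scale) auto
      then show ?thesis using g psd_subdist by (simp add: mx_def)
    qed
    ultimately show "is_subdist (mt i) \<and> is_subdist (mx i)" by simp
  qed
  define fn where "fn = (\<lambda>n. if st n = u then \<mu> else muL)"
  have 2: "\<forall>i. ctrans (mt i) Tau (\<lambda>x. mt (Suc i) x + mx (Suc i) x)"
  proof
    fix i show "ctrans (mt i) Tau (\<lambda>x. mt (Suc i) x + mx (Suc i) x)"
    proof (cases i)
      case 0
      have "(\<lambda>x. mt (Suc i) x + mx (Suc i) x) = muL"
        using 0 by (auto simp: mt_def mx_def g_def)
      then show ?thesis using 0 ctrans_base[OF s0] by (simp add: mt_def)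
    next
      case (Suc j)
      have c: "ctrans (\<lambda>x. \<Sum>n<N. (qq ^ j * w n) * dirac (st n) x) Tau
                 (\<lambda>x. \<Sum>n<N. (qq ^ j * w n) * fn n x)"
      proof (rule ctrans_fin)
        show "\<forall>n\<in>{..<N}. 0 \<le> qq ^ j * w n"
          using qq_nonneg w_pos by (auto simp: less_imp_le)
        have "(\<Sum>n<N. qq ^ j * w n) = qq ^ j" by (simp add: sum_distrib_left[symmetric] sum_w)
        then show "(\<Sum>n<N. qq ^ j * w n) \<le> 1" using pow_le1 by simp
        show "\<forall>n\<in>{..<N}. step (st n) Tau (fn n)" using su step_st by (auto simp: fn_def)
      qed simp
      have e1: "(\<lambda>x. \<Sum>n<N. (qq ^ j * w n) * dirac (st n) x) = mt i"
        using Suc by (auto simp: mt_def muL_st sum_distrib_left mult.assoc)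
      have e2: "(\<lambda>x. \<Sum>n<N. (qq ^ j * w n) * fn n x) = (\<lambda>x. mt (Suc i) x + mx (Suc i) x)"
      proof
        fix x
        have "(\<Sum>n<N. (qq ^ j * w n) * fn n x)
            = (\<Sum>n<N. qq ^ j * ((if st n = u then w n else 0) * \<mu> x) + qq ^ j * ((if st n = u then 0 else w n) * muL x))"
          by (rule sum.cong) (auto simp: fn_def)
        also have "\<dots> = qq ^ j * pp * \<mu> x + qq ^ j * qq * muL x"
          by (simp add: sum.distrib pp_def qq_def sum_distrib_left sum_distrib_right mult.assoc)
        also have "\<dots> = mt (Suc i) x + mx (Suc i) x"
          using Suc by (simp add: mt_def mx_def g_def algebra_simps)
        finally show "(\<Sum>n<N. (qq ^ j * w n) * fn n x) = mt (Suc i) x + mx (Suc i) x" .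
      qed
      show ?thesis using c unfolding e1 e2 .
    qed
  qed
  have 3: "dirac s0 = (\<lambda>x. mt 0 x + mx 0 x)" by (simp add: mt_def mx_def g_def)
  have 4: "\<mu> = (\<lambda>x. \<Sum>\<^sub>\<infinity>i. mx i x)"
  proof
    fix x
    have "(\<Sum>\<^sub>\<infinity>i. mx i x) = (\<Sum>\<^sub>\<infinity>i. (if i < 2 then 0 else qq ^ (i - 2) * pp) * \<mu> x)"
      by (simp add: mx_def g_def)
    also have "\<dots> = \<mu> x" using qq_nonneg qq_less pq by (intro geo_infsum) auto
    finally show "\<mu> x = (\<Sum>\<^sub>\<infinity>i. mx i x)" by simp
  qed
  show ?thesis unfolding tau_star_def using 1 2 3 4 by blast
qed

end

lemma key_wtrans:
  assumes "step s0 Tau muL" "k \<in> set js" "step (EL k) a \<mu>"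
  shows "wtrans (dirac s0) a \<mu>"
proof -
  have uk: "u k = TL k" using u_def[OF assms(2)] .
  have "tau_star (dirac s0) (dirac (TL k))" using keyW[OF assms(2,1)] unfolding uk .
  moreover have "ctrans (dirac (TL k)) a \<mu>" using assms(3) by (intro ctrans_base step_TL_E)
  moreover have "tau_star \<mu> \<mu>" using assms(3) step_psd psd_subdist tau_zero by fastforce
  ultimately show ?thesis unfolding wtrans_def by blast
qed

lemma key_hat:
  assumes "step s0 Tau muL" "k \<in> set js" "step (EL k) a \<mu>"
  shows "hat_wtrans (dirac s0) a \<mu>"
proof (cases "a = Tau")
  case True
  have uk: "u k = TL k" using u_def[OF assms(2)] .
  have "tau_star (dirac s0) \<mu>"
    using keyT[OF assms(2,1)] step_TL_E[OF assms(3)] True unfolding uk by simp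
  then show ?thesis using True by (simp add: hat_wtrans_def)
next
  case False then show ?thesis using key_wtrans[OF assms] by (simp add: hat_wtrans_def)
qed

end


context setting begin

lemma wb: "weak_bisim SS"
  unfolding weak_bisim_def
proof (intro allI impI)
  fix t t' assume "SS t t'"
  then consider (r) "rel t t'" | (T) i where "i \<in> set js" "t = TL i" "t' = Rt" unfolding SS_def by blast
  then show "closed t \<and> closed t' \<and>
        (\<forall>a \<mu>. step t a \<mu> \<longrightarrow> (\<exists>\<nu>. hat_wtrans (dirac t') a \<nu> \<and> lift SS \<mu> \<nu>)) \<and>
        (\<forall>a \<nu>. step t' a \<nu> \<longrightarrow> (\<exists>\<mu>. hat_wtrans (dirac t) a \<mu> \<and> lift SS \<mu> \<nu>))"
  proof cases
    case r
    have f: "\<exists>\<nu>. hat_wtrans (dirac t') a \<nu> \<and> lift SS \<mu> \<nu>" if st: "step t a \<mu>" for a \<mu>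
    proof -
      obtain n where "stepn n t a \<mu>" using step_stepn[OF st] by blast
      from fwd[OF this r] show ?thesis using hat_one by blast
    qed
    have b: "\<exists>\<mu>. hat_wtrans (dirac t) a \<mu> \<and> lift SS \<mu> \<nu>" if st: "step t' a \<nu>" for a \<nu>
    proof -
      obtain n where "stepn n t' a \<nu>" using step_stepn[OF st] by blast
      from bwd[OF this r] obtain \<mu> where mu: "lift SS \<mu> \<nu>" "bm t a \<mu>" by blast
      then have "hat_wtrans (dirac t) a \<mu>" unfolding bm_def using hat_one key_hat by blast
      then show ?thesis using mu by blast
    qed
    show ?thesis using rel_closed[OF r] f b by blast
  next
    case T
    have f: "\<exists>\<nu>. hat_wtrans (dirac t') a \<nu> \<and> lift SS \<mu> \<nu>" if st: "step t a \<mu>" for a \<mu>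
    proof -
      from st T have "step Lt a \<mu> \<or> step (EL i) a \<mu>" by (simp add: TL_def step_Plus)
      then show ?thesis
      proof
        assume "step Lt a \<mu>"
        then have "(a = Tau \<and> \<mu> = muL) \<or> step FL a \<mu>" by (simp add: stepL)
        then show ?thesis
        proof
          assume "a = Tau \<and> \<mu> = muL"
          then show ?thesis using T hat_one[OF step_Rt_tau] lift_muL by auto
        next
          assume "step FL a \<mu>"
          then obtain n where "stepn n FL a \<mu>" using step_stepn by blast
          from fwd[OF this rel_F] obtain \<nu> where "step FR a \<nu>" "lift SS \<mu> \<nu>" by blast
          then show ?thesis using T hat_one stepR by blast
        qed
      next
        assume "step (EL i) a \<mu>"
        then obtain n where "stepn n (EL i) a \<mu>" using step_stepn by blast
        from fwd[OF this rel_E[OF T(1)]] obtain \<nu> where "step (ER i) a \<nu>" "lift SS \<mu> \<nu>" by blast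
        then show ?thesis using T hat_one stepR by blast
      qed
    qed
    have b: "\<exists>\<mu>. hat_wtrans (dirac t) a \<mu> \<and> lift SS \<mu> \<nu>" if st: "step t' a \<nu>" for a \<nu>
    proof -
      have tauT: "step (TL i) Tau muL" by (rule step_TL_tau)
      from st T have "(a = Tau \<and> \<nu> = dirac Rt) \<or> (\<exists>j\<in>set js. step (ER j) a \<nu>) \<or> step FR a \<nu>"
        by (simp add: stepR)
      then show ?thesis
      proof (elim disjE)
        assume a: "a = Tau \<and> \<nu> = dirac Rt"
        have "tau_star (dirac (TL i)) (dirac (TL i))" by (rule tau_zero[OF psd_subdist[OF psd_dirac order_refl]])
        moreover have "lift SS (dirac (TL i)) (dirac Rt)" using T by (intro lift_base) (auto simp: SS_def)
        ultimately show ?thesis using a T by (auto simp: hat_wtrans_def)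
      next
        assume "\<exists>j\<in>set js. step (ER j) a \<nu>"
        then obtain j n where j: "j \<in> set js" "stepn n (ER j) a \<nu>" using step_stepn by blast
        from bwd[OF j(2) rel_E[OF j(1)]] obtain \<mu> where mu: "lift SS \<mu> \<nu>" "bm (EL j) a \<mu>" by blast
        from bm_E[OF mu(2) j(1)] obtain k where "k \<in> set js" "step (EL k) a \<mu>" by blast
        from key_hat[OF tauT this] show ?thesis using mu T by blast
      next
        assume "step FR a \<nu>"
        then obtain n where "stepn n FR a \<nu>" using step_stepn by blast
        from bwd[OF this rel_F] obtain \<mu> where mu: "lift SS \<mu> \<nu>" "bm FL a \<mu>" by blast
        from mu(2) have "hat_wtrans (dirac (TL i)) a \<mu>"
          unfolding bm_def
        proof
          assume "step FL a \<mu>"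
          then have "step (TL i) a \<mu>" by (simp add: TL_def step_Plus stepL)
          then show ?thesis by (rule hat_one)
        next
          assume "step FL Tau muL \<and> (\<exists>j\<in>set js. step (EL j) a \<mu>)"
          then show ?thesis using key_hat[OF tauT] by blast
        qed
        then show ?thesis using mu T by blast
      qed
    qed
    show ?thesis using T closed_TL closed_Rt f b by blast
  qed
qed

lemma SS_wbisim: "SS x y \<Longrightarrow> wbisim x y"
  unfolding wbisim_def using wb by blast

lemma ccong_LR: "ccong Lt Rt"
  unfolding ccong_def
proof (intro conjI allI impI)
  show "closed Lt" "closed Rt" by (rule closed_Lt, rule closed_Rt)
next
  fix a \<mu> assume "step Lt a \<mu>"
  then obtain n where "stepn n Lt a \<mu>" using step_stepn by blast
  from fwd[OF this rel_LR] obtain \<nu> where "step Rt a \<nu>" "lift SS \<mu> \<nu>" by blast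
  then show "\<exists>\<nu>. wtrans (dirac Rt) a \<nu> \<and> lift wbisim \<mu> \<nu>"
    using wtrans_one lift_mono SS_wbisim by blast
next
  fix a \<nu> assume "step Rt a \<nu>"
  then obtain n where "stepn n Rt a \<nu>" using step_stepn by blast
  from bwd[OF this rel_LR] obtain \<mu> where mu: "lift SS \<mu> \<nu>" "bm Lt a \<mu>" by blast
  have "wtrans (dirac Lt) a \<mu>" using mu(2) unfolding bm_def using wtrans_one key_wtrans by blast
  then show "\<exists>\<mu>. wtrans (dirac Lt) a \<mu> \<and> lift wbisim \<mu> \<nu>"
    using mu(1) lift_mono SS_wbisim by blast
qed

end

lemma fv_close:
  assumes "\<forall>Y. closed (\<sigma> Y)"
  shows "fvN (substN (\<sigma>(X := Var X)) G) \<subseteq> {X}"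
proof -
  have "fvN (substN (\<sigma>(X := Var X)) G) \<subseteq> (\<Union>Y\<in>fvN G. fvN ((\<sigma>(X := Var X)) Y))" by (rule fv_subst)
  also have "\<dots> \<subseteq> {X}" using assms by (auto simp: closed_def split: if_splits)
  finally show ?thesis .
qed

theorem mainTheorem5:
  fixes I :: "'i set" and "is" :: "'i list"
    and E :: "'i \<Rightarrow> ('a, 'v) nexp" and F :: "('a, 'v) nexp" and X :: 'v
    and p :: "'i \<Rightarrow> real"
  assumes "finite I" and "distinct is" and "set is = I"
    and "\<forall>i\<in>I. 0 < p i" and "(\<Sum>i\<in>I. p i) = 1"
  shows "cong
     (Rec X (Plus (Pre Tau (pbig p (\<lambda>i. Plus (Var X) (E i)) is)) F))
     (Rec X (Plus (Plus (Pre Tau (Dirac (Var X))) (nsum E is)) F))"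
  unfolding cong_def
proof (intro allI impI)
  fix \<sigma> :: "'v \<Rightarrow> ('a, 'v) nexp" assume cl: "\<forall>Y. closed (\<sigma> Y)"
  let ?e = "\<lambda>i. substN (\<sigma>(X := Var X)) (E i)"
  let ?f = "substN (\<sigma>(X := Var X)) F"
  interpret S: setting p ?e ?f X "is"
  proof
    show "\<forall>i\<in>set is. 0 < p i" using assms by simp
    show "sum_list (map p is) = 1" using assms by (simp add: sum_list_distinct_conv_sum_set)
    show "\<forall>i\<in>set is. fvN (?e i) \<subseteq> {X}" using fv_close[OF cl] by blast
    show "fvN ?f \<subseteq> {X}" using fv_close[OF cl] by blast
  qed
  have "substN \<sigma> (Rec X (Plus (Pre Tau (pbig p (\<lambda>i. Plus (Var X) (E i)) is)) F)) = S.Lt"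
    by (simp add: S.Lt_def S.BL_def substP_pbig)
  moreover have "substN \<sigma> (Rec X (Plus (Plus (Pre Tau (Dirac (Var X))) (nsum E is)) F)) = S.Rt"
    by (simp add: S.Rt_def S.BR_def substN_nsum)
  ultimately show "ccong (substN \<sigma> (Rec X (Plus (Pre Tau (pbig p (\<lambda>i. Plus (Var X) (E i)) is)) F)))
          (substN \<sigma> (Rec X (Plus (Plus (Pre Tau (Dirac (Var X))) (nsum E is)) F)))"
    using S.ccong_LR by simp
qed


end
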